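(* Let $f$ be a real (or complex) polynomial of exact degree $d\ge0$. Define functions on integers by $F_0(x)=1$ and, for $i\ge1$ and integers $x\ge i-1$, $$F_i(x)=\sum_{m=i}^{x}f(m-i+1)\,F_{i-1}(m)$$ (an empty sum being $0$). Then for each $i\ge 0$ there is a polynomial $P_i$ of exact degree $i(d+1)$ such that $F_i(x)=P_i(x)$ for all integers $x\ge i-1$. In particular, if $\lambda_p\mu_p=f(p)$ for all $p\ge1$, then the quantity $c_{k,\delta}$ equals $\big(\prod_{i=1}^{\delta}\lambda_i\big)P_j\big((k+\delta)/2\big)$ with $j=(k-\delta)/2$, where $P_j$ is a polynomial of degree $j(d+1)$ not depending on $\delta$ (so for $\delta=0$, $c_{k,0}$ is the value at $k/2$ of a polynomial of degree $\tfrac{k}{2}(d+1)$).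
   Context: $c_{k,\delta}=\big(\prod_{i=1}^{\delta}\lambda_i\big)\sum\prod_{i=1}^{j}\lambda_{m_i-i+1}\mu_{m_i-i+1}$, the sum ranging over integer tuples $(m_1,\dots,m_j)$ with $m_i\ge i$ and $m_1\le m_2\le\cdots\le m_j\le (k+\delta)/2$, where $j=(k-\delta)/2$, $0\le\delta\le k$, $k-\delta$ even, and $\lambda_i,\mu_i$ are scalars. *)

theory Defs
  imports "HOL-Computational_Algebra.Polynomial"
begin

text \<open>F f i x: F_0(x) = 1 and, for i >= 1,
  F_i(x) = sum over m = i..x of f(m-i+1) * F_{i-1}(m)  (empty sum = 0).
  Writing i = Suc i', the factor f(m - i + 1) is f(m - i').\<close>
fun Fseq :: "complex poly \<Rightarrow> nat \<Rightarrow> int \<Rightarrow> complex" where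
  "Fseq f 0 x = 1"
| "Fseq f (Suc i) x =
     (\<Sum>m\<in>{int (Suc i)..x}. poly f (of_int (m - int i)) * Fseq f i m)"

text \<open>Tuples (m_1,...,m_j) are encoded as lists ms of length j with ms!(i-1) = m_i.
  Conditions: m_i >= i, nondecreasing, m_j <= (k+delta)/2.\<close>
definition ctuples :: "nat \<Rightarrow> nat \<Rightarrow> nat list set" where
  "ctuples j N = {ms. length ms = j \<and> sorted ms \<and>
                      (\<forall>i<j. i + 1 \<le> ms ! i) \<and> (\<forall>i<j. ms ! i \<le> N)}"

text \<open>c_{k,delta} = (prod_{i=1}^delta lambda_i) * sum prod_{i=1}^j lambda_{m_i-i+1} mu_{m_i-i+1},
  with j = (k-delta)/2 and upper bound (k+delta)/2.  With 0-based index i0 = i-1,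
  m_i - i + 1 = ms!i0 - i0.\<close>
definition ccoef :: "(nat \<Rightarrow> complex) \<Rightarrow> (nat \<Rightarrow> complex) \<Rightarrow> nat \<Rightarrow> nat \<Rightarrow> complex" where
  "ccoef lam mu k \<delta> =
     (\<Prod>i=1..\<delta>. lam i) *
     (\<Sum>ms\<in>ctuples ((k - \<delta>) div 2) ((k + \<delta>) div 2).
        \<Prod>i<(k - \<delta>) div 2. lam (ms ! i - i) * mu (ms ! i - i))"

end

theory Submission
  imports Defs
begin

fun R :: "nat \<Rightarrow> complex poly" where
  "R 0 = 1" | "R (Suc k) = R k * [:of_nat k, 1:]"
declare R.simps(2)[simp del]

lemma R_deg: "degree (R k) = k \<and> coeff (R k) k = 1"
proof (induction k)
  case 0 then show ?case by simp
next
  case (Suc k)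
  have c: "coeff (R (Suc k)) (Suc k) = 1"
    using coeff_mult_degree_sum[of "R k" "[:of_nat k, 1:]"] Suc by (simp add: R.simps)
  have "degree (R (Suc k)) \<le> Suc k"
    using degree_mult_le[of "R k" "[:of_nat k, 1:]"] Suc by (simp add: R.simps)
  moreover have "Suc k \<le> degree (R (Suc k))" using c by (intro le_degree) simp
  ultimately have "degree (R (Suc k)) = Suc k" by (rule antisym)
  then show ?case using c by blast
qed

lemma R_shift: "poly (R k) (x - 1) * (x - 1 + of_nat k) = (x - 1) * poly (R k) x"
proof (induction k)
  case 0 then show ?case by simp
next
  case (Suc k)
  have "poly (R (Suc k)) (x - 1) * (x - 1 + of_nat (Suc k))
      = (poly (R k) (x - 1) * (x - 1 + of_nat k)) * (x + of_nat k)"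
    by (simp add: algebra_simps R.simps)
  also have "\<dots> = ((x - 1) * poly (R k) x) * (x + of_nat k)" using Suc by simp
  also have "\<dots> = (x - 1) * poly (R (Suc k)) x" by (simp add: algebra_simps R.simps)
  finally show ?case .
qed

lemma R_diff: "poly (R (Suc k)) x - poly (R (Suc k)) (x - 1) = of_nat (Suc k) * poly (R k) x"
proof -
  have "poly (R (Suc k)) (x - 1) = (x - 1) * poly (R k) x"
    using R_shift[of k x] by (simp add: algebra_simps R.simps)
  then show ?thesis by (simp add: algebra_simps R.simps)
qed

lemma adiff_ex: "degree (g::complex poly) \<le> n \<Longrightarrow> \<exists>Q. (\<forall>x. poly Q x - poly Q (x-1) = poly g x)
   \<and> degree Q \<le> n+1 \<and> coeff Q (n+1) = coeff g n / of_nat (n+1)"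
proof (induction n arbitrary: g)
  case 0
  then obtain a where g: "g = [:a:]" using degree_eq_zeroE by blast
  show ?case
    by (rule exI[of _ "[:0, a:]"]) (auto simp: g algebra_simps)
next
  case (Suc n)
  define c where "c = coeff g (Suc n)"
  define h where "h = g - smult c (R (Suc n))"
  have "degree h \<le> n"
  proof (rule degree_le, intro allI impI)
    fix i assume "n < i"
    show "coeff h i = 0"
    proof (cases "i = Suc n")
      case True then show ?thesis using R_deg[of "Suc n"] by (simp add: h_def c_def)
    next
      case False
      then have "i > Suc n" using \<open>n < i\<close> by simp
      then show ?thesis using R_deg[of "Suc n"] Suc.prems
        by (simp add: h_def coeff_eq_0)
    qed
  qed
  from Suc.IH[OF this] obtain Q1 where Q1: "\<forall>x. poly Q1 x - poly Q1 (x-1) = poly h x"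
    "degree Q1 \<le> n+1" by blast
  define Q where "Q = smult (c / of_nat (Suc n + 1)) (R (Suc (Suc n))) + Q1"
  have "\<forall>x. poly Q x - poly Q (x-1) = poly g x"
  proof
    fix x
    have "poly Q x - poly Q (x-1) = (c / of_nat (Suc n + 1)) * (poly (R (Suc (Suc n))) x - poly (R (Suc (Suc n))) (x-1)) + (poly Q1 x - poly Q1 (x-1))"
      by (simp add: Q_def algebra_simps)
    also have "\<dots> = c * poly (R (Suc n)) x + poly h x"
      unfolding R_diff using Q1(1) by (simp del: of_nat_Suc R.simps)
    also have "\<dots> = poly g x" by (simp add: h_def del: R.simps)
    finally show "poly Q x - poly Q (x-1) = poly g x" .
  qed
  moreover have "degree Q \<le> Suc n + 1"
    unfolding Q_def using R_deg[of "Suc (Suc n)"] Q1(2)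
    by (intro degree_add_le order.trans[OF degree_smult_le]) auto
  moreover have "coeff Q (Suc n + 1) = coeff g (Suc n) / of_nat (Suc n + 1)"
    unfolding Q_def using R_deg[of "Suc (Suc n)"] Q1(2) by (simp add: c_def coeff_eq_0)
  ultimately show ?case by blast
qed


definition adiff :: "complex poly \<Rightarrow> complex poly" where
 "adiff g = (SOME Q. (\<forall>x. poly Q x - poly Q (x-1) = poly g x) \<and> degree Q \<le> degree g+1 \<and>
     coeff Q (degree g+1) = coeff g (degree g) / of_nat (degree g+1))"

lemma adiff: assumes "g \<noteq> 0"
  shows "(\<forall>x. poly (adiff g) x - poly (adiff g) (x-1) = poly g x) \<and> degree (adiff g) = degree g + 1"
proof -
  have "(\<forall>x. poly (adiff g) x - poly (adiff g) (x-1) = poly g x) \<and> degree (adiff g) \<le> degree g+1 \<and>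
     coeff (adiff g) (degree g+1) = coeff g (degree g) / of_nat (degree g+1)"
    unfolding adiff_def by (rule someI_ex) (rule adiff_ex, simp)
  moreover have "coeff g (degree g) / of_nat (degree g+1) \<noteq> 0"
  proof -
    have h1: "of_nat (degree g + 1) \<noteq> (0::complex)" by (metis Suc_eq_plus1 of_nat_neq_0)
    have h2: "coeff g (degree g) \<noteq> 0" using assms by simp
    show ?thesis using h1 h2 by (simp only: divide_eq_0_iff) blast
  qed
  ultimately show ?thesis using le_degree[of "adiff g" "degree g + 1"] by auto
qed

fun Pp :: "complex poly \<Rightarrow> nat \<Rightarrow> complex poly" where
  "Pp f 0 = 1"
| "Pp f (Suc i) = adiff (pcompose f [:-of_nat i,1:] * Pp f i) +
     [:- poly (adiff (pcompose f [:-of_nat i,1:] * Pp f i)) (of_nat i):]"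

lemma Pp_prop: assumes "f \<noteq> 0"
  shows "Pp f i \<noteq> 0 \<and> degree (Pp f i) = i*(degree f+1) \<and>
     (\<forall>x::int. x \<ge> int i - 1 \<longrightarrow> Fseq f i x = poly (Pp f i) (of_int x))"
proof (induction i)
  case 0 then show ?case by simp
next
  case (Suc i)
  define g where "g = pcompose f [:-of_nat i,1:] * Pp f i"
  define Q where "Q = adiff g"
  have Pe: "Pp f (Suc i) = Q + [:- poly Q (of_nat i):]" by (simp add: Q_def g_def)
  have pc: "pcompose f [:-of_nat i,1:] \<noteq> 0" using assms pcompose_eq_0_iff[of "[:-of_nat i,1:]" f] by simp
  have gnz: "g \<noteq> 0" unfolding g_def using pc Suc.IH by simp
  have dg: "degree g = degree f + i*(degree f+1)"
    unfolding g_def using pc Suc.IH by (simp add: degree_mult_eq degree_pcompose)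
  have Qd: "\<forall>x. poly Q x - poly Q (x-1) = poly g x" "degree Q = degree g + 1"
    using adiff[OF gnz] by (auto simp: Q_def)
  have dP: "degree (Pp f (Suc i)) = Suc i * (degree f + 1)"
    unfolding Pe using Qd(2) dg by (subst degree_add_eq_left) auto
  then have nz: "Pp f (Suc i) \<noteq> 0" by (metis add_is_0 mult_is_0 nat.distinct(1) one_neq_zero degree_0)
  have val: "Fseq f (Suc i) x = poly (Pp f (Suc i)) (of_int x)" if "x \<ge> int i" for x
    using that
  proof (induction x rule: int_ge_induct)
    case base
    then show ?case by (simp add: Pe del: Pp.simps)
  next
    case (step x)
    have set: "{int (Suc i)..x+1} = insert (x+1) {int (Suc i)..x}"
      using step.hyps atLeastAtMostPlus1_int_conv[of "int (Suc i)" x] by (simp add: add.commute)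
    have "Fseq f (Suc i) (x+1) = poly f (of_int (x + 1 - int i)) * Fseq f i (x+1) + Fseq f (Suc i) x"
      unfolding Fseq.simps set by (subst sum.insert) auto
    also have "Fseq f i (x+1) = poly (Pp f i) (of_int (x+1))"
      using Suc.IH step.hyps by auto
    also have "poly f (of_int (x + 1 - int i)) * poly (Pp f i) (of_int (x+1)) = poly g (of_int (x+1))"
      by (simp add: g_def poly_pcompose)
    also have "\<dots> = poly Q (of_int (x+1)) - poly Q (of_int x)"
      using Qd(1)[rule_format, of "of_int (x+1)"] by simp
    finally show ?case using step.IH by (simp add: Pe del: Pp.simps)
  qed
  show ?case using nz dP val by auto
qed


lemma ctuples_finite: "finite (ctuples j m)"
proof (rule finite_subset[OF _ finite_lists_length_eq[of "{0..m}" j]])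
  show "ctuples j m \<subseteq> {xs. set xs \<subseteq> {0..m} \<and> length xs = j}"
    by (auto simp: ctuples_def in_set_conv_nth)
qed simp

lemma ctuples_bij: "bij_betw (\<lambda>(m,ms'). ms'@[m]) (SIGMA m:{Suc j..N}. ctuples j m) (ctuples (Suc j) N)"
proof (rule bij_betw_byWitness[where f'="\<lambda>ms. (last ms, butlast ms)"])
  show "\<forall>a\<in>(SIGMA m:{Suc j..N}. ctuples j m). (\<lambda>ms. (last ms, butlast ms)) ((\<lambda>(m,ms'). ms'@[m]) a) = a"
    by auto
  show "\<forall>b\<in>ctuples (Suc j) N. (\<lambda>(m,ms'). ms'@[m]) ((\<lambda>ms. (last ms, butlast ms)) b) = b"
  proof
    fix b assume "b \<in> ctuples (Suc j) N"
    then have "b \<noteq> []" by (auto simp: ctuples_def)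
    then show "(\<lambda>(m,ms'). ms'@[m]) ((\<lambda>ms. (last ms, butlast ms)) b) = b" by simp
  qed
  show "(\<lambda>(m,ms'). ms'@[m]) ` (SIGMA m:{Suc j..N}. ctuples j m) \<subseteq> ctuples (Suc j) N"
  proof safe
    fix m ms' assume m: "m \<in> {Suc j..N}" and ms': "ms' \<in> ctuples j m"
    have len: "length ms' = j" and so: "sorted ms'" and lo: "\<forall>i<j. i + 1 \<le> ms' ! i"
      and hi: "\<forall>i<j. ms' ! i \<le> m" using ms' by (auto simp: ctuples_def)
    have "\<forall>x\<in>set ms'. x \<le> m" using hi len by (auto simp: in_set_conv_nth)
    then have "sorted (ms' @ [m])" using so by (simp add: sorted_append)
    moreover have "\<forall>i<Suc j. i + 1 \<le> (ms'@[m]) ! i"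
      using lo m len by (auto simp: nth_append less_Suc_eq)
    moreover have "\<forall>i<Suc j. (ms'@[m]) ! i \<le> N"
      using hi m len by (auto simp: nth_append less_Suc_eq)
    ultimately show "ms' @ [m] \<in> ctuples (Suc j) N" using len by (simp add: ctuples_def)
  qed
  show "(\<lambda>ms. (last ms, butlast ms)) ` ctuples (Suc j) N \<subseteq> (SIGMA m:{Suc j..N}. ctuples j m)"
  proof safe
    fix ms assume ms: "ms \<in> ctuples (Suc j) N"
    have len: "length ms = Suc j" and so: "sorted ms" and lo: "\<forall>i<Suc j. i + 1 \<le> ms ! i"
      and hi: "\<forall>i<Suc j. ms ! i \<le> N" using ms by (auto simp: ctuples_def)
    have lst: "last ms = ms ! j" using len by (metis diff_Suc_1 last_conv_nth list.size(3) nat.distinct(1))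
    show "last ms \<in> {Suc j..N}" using lo hi lst by auto
    have "sorted (butlast ms)" using so by (simp add: sorted_butlast)
    moreover have "\<forall>i<j. butlast ms ! i = ms ! i" using len by (simp add: nth_butlast)
    moreover have "\<forall>i<j. ms ! i \<le> ms ! j" using so len by (auto intro: sorted_nth_mono)
    ultimately show "butlast ms \<in> ctuples j (last ms)"
      using len lo lst by (simp add: ctuples_def)
  qed
qed

lemma ctuples_sum: "(\<Sum>ms\<in>ctuples j N. \<Prod>i<j. poly f (of_nat (ms!i - i))) = Fseq f j (int N)"
proof (induction j arbitrary: N)
  case 0
  have "ctuples 0 N = {[]}" by (auto simp: ctuples_def)
  then show ?case by simp
next
  case (Suc j)
  let ?h = "\<lambda>ms. \<Prod>i<Suc j. poly f (of_nat (ms!i - i))"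
  have "(\<Sum>ms\<in>ctuples (Suc j) N. ?h ms) = (\<Sum>x\<in>(SIGMA m:{Suc j..N}. ctuples j m). ?h ((\<lambda>(m,ms'). ms'@[m]) x))"
    by (rule sum.reindex_bij_betw[OF ctuples_bij, symmetric])
  also have "\<dots> = (\<Sum>m\<in>{Suc j..N}. \<Sum>ms'\<in>ctuples j m. ?h (ms'@[m]))"
    by (subst sum.Sigma) (auto simp: ctuples_finite intro!: sum.cong)
  also have "\<dots> = (\<Sum>m\<in>{Suc j..N}. poly f (of_nat (m - j)) * Fseq f j (int m))"
  proof (rule sum.cong[OF refl])
    fix m assume m: "m \<in> {Suc j..N}"
    have "(\<Sum>ms'\<in>ctuples j m. ?h (ms'@[m])) = (\<Sum>ms'\<in>ctuples j m. poly f (of_nat (m - j)) * (\<Prod>i<j. poly f (of_nat (ms'!i - i))))"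
    proof (rule sum.cong[OF refl])
      fix ms' assume "ms' \<in> ctuples j m"
      then have len: "length ms' = j" by (simp add: ctuples_def)
      have "?h (ms'@[m]) = (\<Prod>i<j. poly f (of_nat ((ms'@[m])!i - i))) * poly f (of_nat (m - j))"
        using len by (simp add: prod.lessThan_Suc nth_append)
      also have "(\<Prod>i<j. poly f (of_nat ((ms'@[m])!i - i))) = (\<Prod>i<j. poly f (of_nat (ms'!i - i)))"
        using len by (intro prod.cong) (auto simp: nth_append)
      finally show "?h (ms'@[m]) = poly f (of_nat (m - j)) * (\<Prod>i<j. poly f (of_nat (ms'!i - i)))"
        by simp
    qed
    also have "\<dots> = poly f (of_nat (m - j)) * Fseq f j (int m)"
      by (simp add: sum_distrib_left[symmetric] Suc.IH)
    finally show "(\<Sum>ms'\<in>ctuples j m. ?h (ms'@[m])) = poly f (of_nat (m - j)) * Fseq f j (int m)" .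
  qed
  also have "\<dots> = (\<Sum>m\<in>int ` {Suc j..N}. poly f (of_int (m - int j)) * Fseq f j m)"
    by (subst sum.reindex) (auto intro!: sum.cong simp: of_nat_diff)
  also have "\<dots> = Fseq f (Suc j) (int N)"
    by (simp only: image_int_atLeastAtMost Fseq.simps)
  finally show ?case .
qed

theorem mainTheorem7:
  fixes f :: "complex poly" and d :: nat
  assumes "f \<noteq> 0" and "degree f = d"
  shows "\<exists>P :: nat \<Rightarrow> complex poly.
     (\<forall>i. P i \<noteq> 0 \<and> degree (P i) = i * (d + 1) \<and>
          (\<forall>x::int. x \<ge> int i - 1 \<longrightarrow> Fseq f i x = poly (P i) (of_int x))) \<and>
     (\<forall>lam mu :: nat \<Rightarrow> complex.
        (\<forall>p\<ge>1. lam p * mu p = poly f (of_nat p)) \<longrightarrow>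
        (\<forall>k \<delta>. \<delta> \<le> k \<longrightarrow> even (k - \<delta>) \<longrightarrow>
           ccoef lam mu k \<delta> =
             (\<Prod>i=1..\<delta>. lam i) * poly (P ((k - \<delta>) div 2)) (of_nat ((k + \<delta>) div 2))))"
proof (intro exI[of _ "Pp f"] conjI allI impI)
  fix i
  show "Pp f i \<noteq> 0" "degree (Pp f i) = i * (d + 1)"
    using Pp_prop[OF assms(1), of i] assms(2) by auto
  show "\<And>x::int. x \<ge> int i - 1 \<Longrightarrow> Fseq f i x = poly (Pp f i) (of_int x)"
    using Pp_prop[OF assms(1), of i] by auto
next
  fix lam mu :: "nat \<Rightarrow> complex" and k \<delta> :: nat
  assume lm: "\<forall>p\<ge>1. lam p * mu p = poly f (of_nat p)" and "\<delta> \<le> k" "even (k - \<delta>)"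
  define j where "j = (k - \<delta>) div 2"
  define N where "N = (k + \<delta>) div 2"
  have jN: "j \<le> N" unfolding j_def N_def by (intro div_le_mono) simp
  have "(\<Sum>ms\<in>ctuples j N. \<Prod>i<j. lam (ms ! i - i) * mu (ms ! i - i))
      = (\<Sum>ms\<in>ctuples j N. \<Prod>i<j. poly f (of_nat (ms!i - i)))"
  proof (intro sum.cong prod.cong refl)
    fix ms i assume "ms \<in> ctuples j N" "i \<in> {..<j}"
    then have "ms ! i - i \<ge> 1" by (auto simp: ctuples_def)
    then show "lam (ms ! i - i) * mu (ms ! i - i) = poly f (of_nat (ms!i - i))" using lm by blast
  qed
  also have "\<dots> = Fseq f j (int N)" by (rule ctuples_sum)
  also have "\<dots> = poly (Pp f j) (of_nat N)"
    using Pp_prop[OF assms(1), of j] jN by auto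
  finally show "ccoef lam mu k \<delta> = (\<Prod>i=1..\<delta>. lam i) * poly (Pp f ((k - \<delta>) div 2)) (of_nat ((k + \<delta>) div 2))"
    unfolding ccoef_def j_def N_def by simp
qed

end
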